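(* Let $q\in(0,1]$, $\eta\in(0,1]$, $R_0^*>0$, $m_1>0$, and suppose $G_T$ is deterministic. Assume [A12]: (i) for every $T\in\mathbb T$, $\mathbb H_T$ is almost surely thrice differentiable in $\theta$ on $B^*=\{\theta\in\Theta:|\theta-\theta^*|<R_0^*\}$; (ii) $\sup_{T\in\mathbb T}E[\|a_T\|^{m_1}|\partial_\theta\mathbb H_T(\theta^* )|^{m_1}]<\infty$; (iii) $\sup_{T\in\mathbb T}E[\|a_T\|^{2m_1}\sup_{\theta\in B^*}|\partial_\theta^2\mathbb H_T(\theta)|^{m_1}]<\infty$; (iv) $\sup_{T\in\mathbb T}E[\|a_T\|^{2m_1}\sup_{\theta\in B^*}|\partial_\theta^3\mathbb H_T(\theta)|^{m_1}]<\infty$. Then there exist constants $R_0>0$ and $K>0$ such that $$c_T(m_1,R_0)\le K\bigl(\|a_T\|^{-\eta(2-q)}\|G_T^{(00)}\|^{q}\bigr)^{m_1}$$ for every $T\in\mathbb T$ with $\|a_T\|\le1$.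
   Context: Let $\Theta\subset\mathbb R^{\mathsf p}$ be a bounded open set with closure $\overline\Theta$ and $\theta^*\in\Theta$. Let $(\Omega,\mathcal F,P)$ be a probability space, $\mathbb T\subset\mathbb R_{\ge0}$ with $\sup\mathbb T=\infty$. For each $T\in\mathbb T$, $\mathbb H_T:\Omega\times\overline\Theta\to\mathbb R$ is a random field continuous in $\theta$ for every $\omega$; $\partial_\theta^k\mathbb H_T$ denotes its $k$-th derivative tensor. Penalty weights $\xi_T^j>0$, $j=1,\dots,\mathsf p$, are given. $\mathcal J^{(0)}=\{j:\theta^*_j=0\}$, $\mathcal J^{(1)}=\{j:\theta^*_j\ne0\}$; $A^{(00)}=(A_{ij})_{i,j\in\mathcal J^{(0)}}$. $a_T=\mathrm{diag}(\alpha_T^1,\dots,\alpha_T^{\mathsf p})$ is deterministic, invertible, with $\|a_T\|\to0$ ($\|\cdot\|$ spectral norm); $\mathbb U_T=\{u:\theta^*+a_Tu\in\overline\Theta\}$. $\tilde a_T$ is diagonal with $(\tilde a_T)_{jj}=(\xi_T^j)^{-1/q}$ for $j\in\mathcal J^{(0)}$ and $\alpha_T^j$ for $j\in\mathcal J^{(1)}$; $G_T=a_T^{-1}\tilde a_T$. For $R>0$, $\mathsf c_{T,R}=\sup\frac{|\mathbb H_T(\theta^*+a_Tu)-\mathbb H_T(\theta^*+a_Tv)|}{|u-v|^q}$ over $u,v\in\mathbb U_T$, $u\ne v$, $|a_Tu|,|a_Tv|<R\|a_T\|^{1-\eta}$; for $m>0$, $c_T(m,R)=E[|\mathsf c_{T,R}|^{m}\|G_T^{(00)}\|^{qm}]$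 (possibly $\infty$). *)

theory Defs
  imports "HOL-Probability.Probability"
begin

definition enn_powr :: "ennreal \<Rightarrow> real \<Rightarrow> ennreal" where
  "enn_powr x p = (if x = \<top> then \<top> else ennreal (enn2real x powr p))"

definition diag_mat :: "('n::finite \<Rightarrow> real) \<Rightarrow> real^'n^'n" where
  "diag_mat d = (\<chi> i j. if i = j then d i else 0)"

definition spec_norm :: "real^'n::finite^'n \<Rightarrow> real" where
  "spec_norm A = onorm (\<lambda>x. A *v x)"

definition proj_coords :: "'n::finite set \<Rightarrow> real^'n \<Rightarrow> real^'n" where
  "proj_coords J x = (\<chi> i. if i \<in> J then x $ i else 0)"

text \<open>Spectral norm of the principal sub-matrix A^(JJ) = (A_ij)_{i,j in J}.\<close>
definition sub_spec_norm :: "real^'n::finite^'n \<Rightarrow> 'n set \<Rightarrow> real" where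
  "sub_spec_norm A J = onorm (\<lambda>x. proj_coords J (A *v proj_coords J x))"

definition grad :: "(real^'n::finite \<Rightarrow> real) \<Rightarrow> real^'n \<Rightarrow> real^'n" where
  "grad f x = (\<chi> i. frechet_derivative f (at x) (axis i 1))"

definition hess :: "(real^'n::finite \<Rightarrow> real) \<Rightarrow> real^'n \<Rightarrow> real^'n^'n" where
  "hess f x = (\<chi> i j. frechet_derivative (\<lambda>y. grad f y $ i) (at x) (axis j 1))"

definition deriv3 :: "(real^'n::finite \<Rightarrow> real) \<Rightarrow> real^'n \<Rightarrow> real^'n^'n^'n" where
  "deriv3 f x = (\<chi> i j k. frechet_derivative (\<lambda>y. hess f y $ i $ j) (at x) (axis k 1))"

definition thrice_differentiable_on :: "(real^'n::finite \<Rightarrow> real) \<Rightarrow> (real^'n) set \<Rightarrow> bool" where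
  "thrice_differentiable_on f S \<longleftrightarrow>
     (\<forall>x\<in>S. f differentiable (at x) \<and> grad f differentiable (at x) \<and> hess f differentiable (at x))"

definition aT :: "(real \<Rightarrow> 'n::finite \<Rightarrow> real) \<Rightarrow> real \<Rightarrow> real^'n^'n" where
  "aT \<alpha> T = diag_mat (\<alpha> T)"

definition J0 :: "real^'n::finite \<Rightarrow> 'n set" where
  "J0 \<theta>s = {j. \<theta>s $ j = 0}"

definition atildeT :: "real \<Rightarrow> real^'n::finite \<Rightarrow> (real \<Rightarrow> 'n \<Rightarrow> real) \<Rightarrow> (real \<Rightarrow> 'n \<Rightarrow> real)
    \<Rightarrow> real \<Rightarrow> real^'n^'n" where
  "atildeT q \<theta>s \<alpha> \<xi> T =
     diag_mat (\<lambda>j. if j \<in> J0 \<theta>s then \<xi> T j powr (-(1/q)) else \<alpha> T j)"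

definition GT :: "real \<Rightarrow> real^'n::finite \<Rightarrow> (real \<Rightarrow> 'n \<Rightarrow> real) \<Rightarrow> (real \<Rightarrow> 'n \<Rightarrow> real)
    \<Rightarrow> real \<Rightarrow> real^'n^'n" where
  "GT q \<theta>s \<alpha> \<xi> T = matrix_inv (aT \<alpha> T) ** atildeT q \<theta>s \<alpha> \<xi> T"

definition UT :: "(real^'n::finite) set \<Rightarrow> real^'n \<Rightarrow> (real \<Rightarrow> 'n \<Rightarrow> real) \<Rightarrow> real \<Rightarrow> (real^'n) set" where
  "UT \<Theta> \<theta>s \<alpha> T = {u. \<theta>s + aT \<alpha> T *v u \<in> closure \<Theta>}"

definition cTR :: "real \<Rightarrow> real \<Rightarrow> (real^'n::finite) set \<Rightarrow> real^'n \<Rightarrow> (real \<Rightarrow> 'n \<Rightarrow> real)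
    \<Rightarrow> (real \<Rightarrow> 'a \<Rightarrow> real^'n \<Rightarrow> real) \<Rightarrow> real \<Rightarrow> real \<Rightarrow> 'a \<Rightarrow> ennreal" where
  "cTR q \<eta> \<Theta> \<theta>s \<alpha> H T R \<omega> =
     (SUP uv \<in> {(u, v). u \<in> UT \<Theta> \<theta>s \<alpha> T \<and> v \<in> UT \<Theta> \<theta>s \<alpha> T \<and> u \<noteq> v \<and>
                 norm (aT \<alpha> T *v u) < R * spec_norm (aT \<alpha> T) powr (1 - \<eta>) \<and>
                 norm (aT \<alpha> T *v v) < R * spec_norm (aT \<alpha> T) powr (1 - \<eta>)}.
        ennreal (\<bar>H T \<omega> (\<theta>s + aT \<alpha> T *v fst uv) - H T \<omega> (\<theta>s + aT \<alpha> T *v snd uv)\<bar>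
                 / norm (fst uv - snd uv) powr q))"

definition cT :: "'a measure \<Rightarrow> real \<Rightarrow> real \<Rightarrow> (real^'n::finite) set \<Rightarrow> real^'n
    \<Rightarrow> (real \<Rightarrow> 'n \<Rightarrow> real) \<Rightarrow> (real \<Rightarrow> 'n \<Rightarrow> real) \<Rightarrow> (real \<Rightarrow> 'a \<Rightarrow> real^'n \<Rightarrow> real)
    \<Rightarrow> real \<Rightarrow> real \<Rightarrow> real \<Rightarrow> ennreal" where
  "cT M q \<eta> \<Theta> \<theta>s \<alpha> \<xi> H T m R =
     (\<integral>\<^sup>+ \<omega>. enn_powr (cTR q \<eta> \<Theta> \<theta>s \<alpha> H T R \<omega>) m
              * ennreal (sub_spec_norm (GT q \<theta>s \<alpha> \<xi> T) (J0 \<theta>s) powr (q * m)) \<partial>M)"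

end

theory Submission
  imports Defs
begin


lemma lower_nn_integral_add:
  assumes f[measurable]: "f \<in> borel_measurable M"
  shows "(\<integral>\<^sup>+x. f x + g x \<partial>M) \<le> integral\<^sup>N M f + integral\<^sup>N M g"
proof -
  have "(\<integral>\<^sup>+x. f x + g x \<partial>M) = (SUP h\<in>{h. simple_function M h \<and> h \<le> (\<lambda>x. f x + g x) \<and> (\<forall>x. h x < top)}. integral\<^sup>S M h)"
    by (rule nn_integral_def_finite)
  also have "\<dots> \<le> integral\<^sup>N M f + integral\<^sup>N M g"
  proof (rule SUP_least)
    fix h assume h: "h \<in> {h. simple_function M h \<and> h \<le> (\<lambda>x. f x + g x) \<and> (\<forall>x. h x < top)}"
    then have hs: "simple_function M h" and hle: "\<And>x. h x \<le> f x + g x" and ht: "\<And>x. h x < top" by (auto simp: le_fun_def)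
    have hm[measurable]: "h \<in> borel_measurable M" using hs by (rule borel_measurable_simple_function)
    have "integral\<^sup>S M h = integral\<^sup>N M h" using hs by (simp add: nn_integral_eq_simple_integral)
    also have "\<dots> \<le> (\<integral>\<^sup>+x. (h x - f x) + f x \<partial>M)"
      by (rule nn_integral_mono) (use diff_add_self_ennreal in force)
    also have "\<dots> = (\<integral>\<^sup>+x. h x - f x \<partial>M) + integral\<^sup>N M f"
      by (rule nn_integral_add) auto
    also have "(\<integral>\<^sup>+x. h x - f x \<partial>M) \<le> integral\<^sup>N M g"
      by (rule nn_integral_mono, metis hle ht ennreal_minus_le_iff less_irrefl)
    finally show "integral\<^sup>S M h \<le> integral\<^sup>N M f + integral\<^sup>N M g"
      by (simp add: add.commute add_right_mono)
  qed
  finally show ?thesis .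
qed

lemma lower_nn_integral_cmult:
  assumes k: "k > 0"
  shows "(\<integral>\<^sup>+x. ennreal k * g x \<partial>M) \<le> ennreal k * integral\<^sup>N M g"
proof -
  have "(\<integral>\<^sup>+x. ennreal k * g x \<partial>M) = (SUP h\<in>{h. simple_function M h \<and> h \<le> (\<lambda>x. ennreal k * g x)}. integral\<^sup>S M h)"
    by (simp add: nn_integral_def)
  also have "\<dots> \<le> ennreal k * integral\<^sup>N M g"
  proof (rule SUP_least)
    fix h assume h: "h \<in> {h. simple_function M h \<and> h \<le> (\<lambda>x. ennreal k * g x)}"
    then have hs: "simple_function M h" and hle: "\<And>x. h x \<le> ennreal k * g x" by (auto simp: le_fun_def)
    have hm[measurable]: "h \<in> borel_measurable M" using hs by (rule borel_measurable_simple_function)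
    have ci: "ennreal k * ennreal (inverse k) = 1" using k by (simp add: ennreal_mult[symmetric])
    have "integral\<^sup>S M h = integral\<^sup>N M h" using hs by (simp add: nn_integral_eq_simple_integral)
    also have "\<dots> = (\<integral>\<^sup>+x. ennreal k * (ennreal (inverse k) * h x) \<partial>M)"
      by (simp add: mult.assoc[symmetric] ci)
    also have "\<dots> = ennreal k * (\<integral>\<^sup>+x. ennreal (inverse k) * h x \<partial>M)"
      by (rule nn_integral_cmult) auto
    also have "\<dots> \<le> ennreal k * integral\<^sup>N M g"
    proof (rule mult_left_mono)
      show "(\<integral>\<^sup>+x. ennreal (inverse k) * h x \<partial>M) \<le> integral\<^sup>N M g"
      proof (rule nn_integral_mono)
        fix x
        have "ennreal (inverse k) * h x \<le> ennreal (inverse k) * (ennreal k * g x)" using hle by (simp add: mult_left_mono)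
        also have "\<dots> = g x" by (metis ci mult.assoc mult.commute mult_1)
        finally show "ennreal (inverse k) * h x \<le> g x" .
      qed
    qed simp
    finally show "integral\<^sup>S M h \<le> ennreal k * integral\<^sup>N M g" .
  qed
  finally show ?thesis .
qed



lemma grad_has_deriv:
  fixes f :: "real^'n::finite \<Rightarrow> real"
  assumes "f differentiable (at z)"
  shows "(f has_derivative (\<lambda>h. grad f z \<bullet> h)) (at z)"
proof -
  define D where "D = frechet_derivative f (at z)"
  have d: "(f has_derivative D) (at z)" using assms frechet_derivative_works D_def by blast
  have lin: "linear D" using d by (simp add: has_derivative_linear)
  have "D h = grad f z \<bullet> h" for h
  proof -
    have "D h = D (\<Sum>i\<in>UNIV. h$i *\<^sub>R axis i 1)"
      using basis_expansion[of h] by (simp add: scalar_mult_eq_scaleR)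
    also have "\<dots> = (\<Sum>i\<in>UNIV. h$i * D (axis i 1))"
      using lin by (simp add: linear_sum linear_scale)
    also have "\<dots> = grad f z \<bullet> h"
      by (simp add: grad_def inner_vec_def D_def mult.commute)
    finally show ?thesis .
  qed
  then have "D = (\<lambda>h. grad f z \<bullet> h)" by auto
  then show ?thesis using d by simp
qed

lemma hess_has_deriv:
  fixes f :: "real^'n::finite \<Rightarrow> real"
  assumes "grad f differentiable (at z)"
  shows "(grad f has_derivative (\<lambda>h. hess f z *v h)) (at z)"
proof -
  define D where "D = frechet_derivative (grad f) (at z)"
  have d: "(grad f has_derivative D) (at z)" using assms frechet_derivative_works D_def by blast
  have bl: "bounded_linear D" using d by (simp add: has_derivative_bounded_linear)
  have comp: "((\<lambda>y. grad f y $ i) has_derivative (\<lambda>h. D h $ i)) (at z)" for i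
    using bounded_linear.has_derivative[OF bounded_linear_vec_nth d] by simp
  have "hess f z = matrix D"
    unfolding hess_def matrix_def
    using frechet_derivative_at[OF comp] by (simp add: vec_eq_iff) metis
  then have "(\<lambda>h. hess f z *v h) = D" using bl by simp
  then show ?thesis using d by simp
qed

lemma onorm_hess_le:
  fixes A :: "real^'n::finite^'n"
  shows "onorm (\<lambda>h. A *v h) \<le> real CARD('n) * real CARD('n) * norm A"
proof -
  have "\<bar>A$i$j\<bar> \<le> norm A" for i j
  proof -
    have "norm (A$i) \<le> norm A" by (rule Finite_Cartesian_Product.norm_nth_le)
    then show ?thesis using component_le_norm_cart[of "A$i" j] by linarith
  qed
  then show ?thesis using onorm_le_matrix_component[of A "norm A"] by simp
qed

lemma onorm_inner_le:
  fixes g :: "real^'n::finite"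
  shows "onorm (\<lambda>h. g \<bullet> h) \<le> norm g"
  by (rule onorm_le) (metis Cauchy_Schwarz_ineq2 real_norm_def)

lemma taylor_bound:
  fixes f :: "real^'n::finite \<Rightarrow> real"
  assumes diff: "\<And>z. z \<in> ball c \<rho> \<Longrightarrow> f differentiable (at z) \<and> grad f differentiable (at z)"
    and hb: "\<And>z. z \<in> ball c \<rho> \<Longrightarrow> norm (hess f z) \<le> L"
    and r: "r \<le> \<rho>" and x: "x \<in> ball c r" and y: "y \<in> ball c r"
  shows "\<bar>f x - f y\<bar> \<le> (norm (grad f c) + real CARD('n) * real CARD('n) * L * r) * norm (x - y)"
proof -
  let ?C = "real CARD('n) * real CARD('n)"
  have r0: "0 < r" using x zero_le_dist[of c x] unfolding mem_ball by linarith
  have c: "c \<in> ball c \<rho>" using r r0 by simp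
  have gb: "norm (grad f z - grad f c) \<le> ?C * L * norm (z - c)" if z: "z \<in> ball c \<rho>" for z
  proof (rule differentiable_bound[of "ball c \<rho>" "grad f" "\<lambda>z h. hess f z *v h"])
    show "convex (ball c \<rho>)" by simp
    show "(grad f has_derivative (\<lambda>h. hess f w *v h)) (at w within ball c \<rho>)" if "w \<in> ball c \<rho>" for w
      using hess_has_deriv diff that has_derivative_at_withinI by blast
    show "onorm (\<lambda>h. hess f w *v h) \<le> ?C * L" if "w \<in> ball c \<rho>" for w
    proof -
      have "?C * norm (hess f w) \<le> ?C * L" using hb[OF that] by (intro mult_left_mono) auto
      then show ?thesis using onorm_hess_le[of "hess f w"] by linarith
    qed
  qed (use z c in auto)
  have gr: "norm (grad f z) \<le> norm (grad f c) + ?C * L * r" if z: "z \<in> ball c r" for z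
  proof -
    have zz: "z \<in> ball c \<rho>" using z r by auto
    have L0: "0 \<le> L" using hb[OF c] norm_ge_zero order_trans by blast
    have "norm (z - c) \<le> r" using z by (simp add: dist_norm norm_minus_commute)
    then have "?C * L * norm (z - c) \<le> ?C * L * r" using L0 by (simp add: mult_left_mono)
    then show ?thesis using gb[OF zz] norm_triangle_ineq2[of "grad f z" "grad f c"] by linarith
  qed
  have "norm (f x - f y) \<le> (norm (grad f c) + ?C * L * r) * norm (x - y)"
  proof (rule differentiable_bound[of "ball c r" f "\<lambda>z h. grad f z \<bullet> h"])
    show "convex (ball c r)" by simp
    show "(f has_derivative (\<lambda>h. grad f w \<bullet> h)) (at w within ball c r)" if "w \<in> ball c r" for w
      using grad_has_deriv diff that r has_derivative_at_withinI by (metis in_mono subset_ball)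
    show "onorm (\<lambda>h. grad f w \<bullet> h) \<le> norm (grad f c) + ?C * L * r" if "w \<in> ball c r" for w
      using onorm_inner_le[of "grad f w"] gr[OF that] by linarith
  qed (use x y in auto)
  then show ?thesis by simp
qed



lemma grad_seq:
  fixes f :: "real^'n::finite \<Rightarrow> real"
  assumes "f differentiable (at z)"
  shows "(\<lambda>n. (f (z + inverse (real (Suc n)) *\<^sub>R e) - f z) * real (Suc n)) \<longlonglongrightarrow> grad f z \<bullet> e"
proof -
  have d: "(f has_derivative (\<lambda>h. grad f z \<bullet> h)) (at (z + 0 *\<^sub>R e))" using grad_has_deriv[OF assms] by simp
  have p: "((\<lambda>t. z + t *\<^sub>R e) has_derivative (\<lambda>t. t *\<^sub>R e)) (at 0)"
    by (auto intro!: derivative_eq_intros)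
  have "((\<lambda>t. f (z + t *\<^sub>R e)) has_derivative (\<lambda>t. grad f z \<bullet> (t *\<^sub>R e))) (at 0)"
    using has_derivative_compose[OF p d] by simp
  moreover have "(\<lambda>t. grad f z \<bullet> (t *\<^sub>R e)) = (*) (grad f z \<bullet> e)" by (auto simp: mult.commute)
  ultimately have "((\<lambda>t. f (z + t *\<^sub>R e)) has_real_derivative (grad f z \<bullet> e)) (at 0)"
    by (simp add: has_field_derivative_def)
  then have lim: "((\<lambda>h. (f (z + h *\<^sub>R e) - f z) / h) \<longlongrightarrow> grad f z \<bullet> e) (at 0)"
    by (simp add: DERIV_def)
  have s: "filterlim (\<lambda>n. inverse (real (Suc n))) (at 0) sequentially"
    unfolding filterlim_at using LIMSEQ_inverse_real_of_nat by auto
  have "(\<lambda>n. (f (z + inverse (real (Suc n)) *\<^sub>R e) - f z) / inverse (real (Suc n))) \<longlonglongrightarrow> grad f z \<bullet> e"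
    using filterlim_compose[OF lim s] by simp
  then show ?thesis by (simp add: divide_inverse)
qed

definition gtil :: "('a \<Rightarrow> real^'n::finite \<Rightarrow> real) \<Rightarrow> (real^'n) set \<Rightarrow> real^'n \<Rightarrow> 'a \<Rightarrow> real" where
  "gtil H S z \<omega> = sqrt (\<Sum>i\<in>UNIV. (lim (\<lambda>n. if z + inverse (real (Suc n)) *\<^sub>R axis i 1 \<in> S
       then (H \<omega> (z + inverse (real (Suc n)) *\<^sub>R axis i 1) - H \<omega> z) * real (Suc n) else 0))\<^sup>2)"

lemma gtil_meas:
  assumes "\<And>\<theta>. \<theta> \<in> S \<Longrightarrow> (\<lambda>\<omega>. H \<omega> \<theta>) \<in> borel_measurable M" "z \<in> S"
  shows "gtil H S z \<in> borel_measurable M"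
proof -
  have "(\<lambda>\<omega>. if z + inverse (real (Suc n)) *\<^sub>R axis i 1 \<in> S
       then (H \<omega> (z + inverse (real (Suc n)) *\<^sub>R axis i 1) - H \<omega> z) * real (Suc n) else 0) \<in> borel_measurable M" for n i
    using assms by (cases "z + inverse (real (Suc n)) *\<^sub>R axis i 1 \<in> S") auto
  then show ?thesis unfolding gtil_def[abs_def] by measurable
qed

lemma gtil_eq:
  fixes f :: "real^'n::finite \<Rightarrow> real"
  assumes "f differentiable (at z)" "z \<in> interior S"
  shows "gtil (\<lambda>_. f) S z \<omega> = norm (grad f z)"
proof -
  obtain e where e: "e > 0" "ball z e \<subseteq> S" using assms(2) mem_interior by blast
  have "lim (\<lambda>n. if z + inverse (real (Suc n)) *\<^sub>R axis i 1 \<in> S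
       then (f (z + inverse (real (Suc n)) *\<^sub>R axis i 1) - f z) * real (Suc n) else 0) = grad f z $ i" for i
  proof (rule limI)
    have ev: "eventually (\<lambda>n. z + inverse (real (Suc n)) *\<^sub>R axis i 1 \<in> S) sequentially"
    proof -
      have "eventually (\<lambda>n. inverse (real (Suc n)) < e) sequentially"
        using LIMSEQ_inverse_real_of_nat e(1) by (auto simp: order_tendsto_iff)
      then show ?thesis
        by eventually_elim (use e in \<open>auto simp: dist_norm subset_iff\<close>)
    qed
    have "(\<lambda>n. (f (z + inverse (real (Suc n)) *\<^sub>R axis i 1) - f z) * real (Suc n)) \<longlonglongrightarrow> grad f z \<bullet> axis i 1"
      by (rule grad_seq[OF assms(1)])
    then show "(\<lambda>n. if z + inverse (real (Suc n)) *\<^sub>R axis i 1 \<in> S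
       then (f (z + inverse (real (Suc n)) *\<^sub>R axis i 1) - f z) * real (Suc n) else 0) \<longlonglongrightarrow> grad f z $ i"
      by (simp add: inner_axis) (rule Lim_transform_eventually, assumption, use ev in \<open>eventually_elim, auto\<close>)
  qed
  then show ?thesis by (simp add: gtil_def norm_vec_def L2_set_def)
qed



lemma sum_powr_le:
  fixes X Y m :: real
  assumes "0 \<le> X" "0 \<le> Y" "0 < m"
  shows "(X + Y) powr m \<le> 2 powr m * (X powr m + Y powr m)"
proof -
  have "(X + Y) powr m \<le> (2 * max X Y) powr m"
    using assms by (intro powr_mono2) auto
  also have "\<dots> = 2 powr m * max X Y powr m" by (simp add: powr_mult)
  also have "max X Y powr m \<le> X powr m + Y powr m"
    by (cases "X \<le> Y") (auto simp: max_def)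
  finally show ?thesis by (simp add: mult_left_mono)
qed

lemma real_core:
  fixes A R0 q \<eta> m g L C r :: real
  assumes A: "0 < A" "A \<le> 1" and R0: "0 < R0" and q: "0 < q" "q \<le> 1" and eta: "0 < \<eta>" "\<eta> \<le> 1"
    and m: "0 < m" and g: "0 \<le> g" and L: "0 \<le> L" and C: "0 \<le> C" and r: "r = R0 * A powr (1 - \<eta>)"
  shows "((g + C * L * r) * A powr q * (2 * r) powr (1 - q)) powr m
     \<le> 2 powr m * A powr (-(\<eta> * (2 - q)) * m) * (2 * R0) powr ((1 - q) * m) * (A powr m * g powr m)
       + 2 powr m * A powr (-(\<eta> * (2 - q)) * m) * ((C * R0) powr m * (2 * R0) powr ((1 - q) * m)) * (A powr (2 * m) * L powr m)"
proof -
  define Z where "Z = A powr q * (2 * r) powr (1 - q)"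
  define E where "E = A powr (-(\<eta> * (2 - q)) * m)"
  have r0: "0 \<le> r" using r R0 by simp
  have Z0: "0 \<le> Z" by (simp add: Z_def)
  have Zm: "Z powr m = (2 * R0) powr ((1 - q) * m) * A powr (q * m + (1 - \<eta>) * (1 - q) * m)"
  proof -
    have "Z powr m = A powr (q * m) * (2 * r) powr ((1 - q) * m)"
      by (simp add: Z_def powr_mult powr_powr)
    also have "(2 * r) powr ((1 - q) * m) = (2 * R0) powr ((1 - q) * m) * A powr ((1 - \<eta>) * (1 - q) * m)"
      by (simp add: r powr_mult powr_powr mult.assoc)
    finally show ?thesis by (simp add: powr_add)
  qed
  have "((g + C * L * r) * A powr q * (2 * r) powr (1 - q)) powr m = (g + C * L * r) powr m * Z powr m"
    by (simp add: Z_def powr_mult mult.assoc)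
  also have "\<dots> \<le> 2 powr m * (g powr m + (C * L * r) powr m) * Z powr m"
    using sum_powr_le[of g "C * L * r" m] g L C r0 m Z0 by (intro mult_right_mono) auto
  also have "\<dots> = 2 powr m * (g powr m * Z powr m) + 2 powr m * ((C * L * r) powr m * Z powr m)"
    by (simp add: algebra_simps)
  also have "g powr m * Z powr m \<le> E * (2 * R0) powr ((1 - q) * m) * (A powr m * g powr m)"
  proof -
    have "A powr (q * m + (1 - \<eta>) * (1 - q) * m) \<le> A powr (-(\<eta> * (2 - q)) * m + m)"
      using A q eta m by (intro powr_mono') (auto simp: algebra_simps mult_left_mono)
    then have "g powr m * Z powr m \<le> g powr m * ((2 * R0) powr ((1 - q) * m) * A powr (-(\<eta> * (2 - q)) * m + m))"
      unfolding Zm by (intro mult_left_mono mult_left_mono) auto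
    moreover have "A powr (-(\<eta> * (2 - q)) * m + m) = E * A powr m" unfolding E_def by (rule powr_add)
    ultimately show ?thesis by (simp add: algebra_simps)
  qed
  also have "(C * L * r) powr m * Z powr m = E * ((C * R0) powr m * (2 * R0) powr ((1 - q) * m)) * (A powr (2 * m) * L powr m)"
  proof -
    have "(C * L * r) powr m = (C * R0) powr m * L powr m * A powr ((1 - \<eta>) * m)"
      by (simp add: r powr_mult powr_powr algebra_simps)
    moreover have "(1 - \<eta>) * m + (q * m + (1 - \<eta>) * (1 - q) * m) = -(\<eta> * (2 - q)) * m + 2 * m"
      by (simp add: algebra_simps)
    then have "A powr ((1 - \<eta>) * m) * A powr (q * m + (1 - \<eta>) * (1 - q) * m) = E * A powr (2 * m)"
      by (simp add: E_def flip: powr_add)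
    ultimately show ?thesis unfolding Zm
      by (simp add: algebra_simps)
  qed
  finally show ?thesis by (simp add: E_def mult_left_mono algebra_simps)
qed


theorem proposition5:
  fixes M :: "'a measure"
    and \<Theta> :: "(real^'p::finite) set"
    and \<theta>s :: "real^'p"
    and TT :: "real set"
    and H :: "real \<Rightarrow> 'a \<Rightarrow> real^'p \<Rightarrow> real"
    and \<alpha> \<xi> :: "real \<Rightarrow> 'p \<Rightarrow> real"
    and q \<eta> R0s m1 :: real
  assumes prob: "prob_space M"
    and Theta: "open \<Theta>" "bounded \<Theta>" "\<theta>s \<in> \<Theta>"
    and TT: "TT \<subseteq> {0..}" "\<not> bdd_above TT"
    and H_meas: "\<And>T \<theta>. T \<in> TT \<Longrightarrow> \<theta> \<in> closure \<Theta> \<Longrightarrow> (\<lambda>\<omega>. H T \<omega> \<theta>) \<in> borel_measurable M"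
    and H_cont: "\<And>T \<omega>. T \<in> TT \<Longrightarrow> \<omega> \<in> space M \<Longrightarrow> continuous_on (closure \<Theta>) (H T \<omega>)"
    and xi_pos: "\<And>T j. T \<in> TT \<Longrightarrow> \<xi> T j > 0"
    and alpha_nz: "\<And>T j. T \<in> TT \<Longrightarrow> \<alpha> T j \<noteq> 0"
    and a_lim: "filterlim (\<lambda>T. spec_norm (aT \<alpha> T)) (nhds 0) (inf at_top (principal TT))"
    and q: "0 < q" "q \<le> 1"
    and eta: "0 < \<eta>" "\<eta> \<le> 1"
    and R0s: "R0s > 0"
    and m1: "m1 > 0"
    and A12_i: "\<And>T. T \<in> TT \<Longrightarrow>
        AE \<omega> in M. thrice_differentiable_on (H T \<omega>) {\<theta> \<in> \<Theta>. norm (\<theta> - \<theta>s) < R0s}"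
    and A12_ii: "(SUP T \<in> TT. \<integral>\<^sup>+ \<omega>. ennreal (spec_norm (aT \<alpha> T) powr m1
                     * norm (grad (H T \<omega>) \<theta>s) powr m1) \<partial>M) < \<top>"
    and A12_iii: "(SUP T \<in> TT. \<integral>\<^sup>+ \<omega>. ennreal (spec_norm (aT \<alpha> T) powr (2 * m1))
                     * enn_powr (SUP \<theta> \<in> {\<theta> \<in> \<Theta>. norm (\<theta> - \<theta>s) < R0s}.
                                   ennreal (norm (hess (H T \<omega>) \<theta>))) m1 \<partial>M) < \<top>"
    and A12_iv: "(SUP T \<in> TT. \<integral>\<^sup>+ \<omega>. ennreal (spec_norm (aT \<alpha> T) powr (2 * m1))
                     * enn_powr (SUP \<theta> \<in> {\<theta> \<in> \<Theta>. norm (\<theta> - \<theta>s) < R0s}.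
                                   ennreal (norm (deriv3 (H T \<omega>) \<theta>))) m1 \<partial>M) < \<top>"
  shows "\<exists>R0 > 0. \<exists>K > 0. \<forall>T \<in> TT. spec_norm (aT \<alpha> T) \<le> 1 \<longrightarrow>
           cT M q \<eta> \<Theta> \<theta>s \<alpha> \<xi> H T m1 R0
             \<le> ennreal (K * (spec_norm (aT \<alpha> T) powr (-(\<eta> * (2 - q)))
                            * sub_spec_norm (GT q \<theta>s \<alpha> \<xi> T) (J0 \<theta>s) powr q) powr m1)"
proof -
  have prob_M: "prob_space M" by (rule prob)
  obtain e where e: "e > 0" "ball \<theta>s e \<subseteq> \<Theta>" using Theta(1,3) openE by blast
  define R0 where "R0 = min e R0s"
  define B where "B = {\<theta> \<in> \<Theta>. norm (\<theta> - \<theta>s) < R0s}"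
  have R0: "R0 > 0" using e R0s by (simp add: R0_def)
  have ballsub: "ball \<theta>s R0 \<subseteq> B"
    using e by (auto simp: R0_def B_def dist_norm norm_minus_commute)
  define M2 where "M2 = (SUP T \<in> TT. \<integral>\<^sup>+ \<omega>. ennreal (spec_norm (aT \<alpha> T) powr m1
                     * norm (grad (H T \<omega>) \<theta>s) powr m1) \<partial>M)"
  define M3 where "M3 = (SUP T \<in> TT. \<integral>\<^sup>+ \<omega>. ennreal (spec_norm (aT \<alpha> T) powr (2 * m1))
                     * enn_powr (SUP \<theta> \<in> B. ennreal (norm (hess (H T \<omega>) \<theta>))) m1 \<partial>M)"
  define M2r where "M2r = enn2real M2"
  define M3r where "M3r = enn2real M3"
  have M2r: "M2r \<ge> 0" "\<And>T. T \<in> TT \<Longrightarrow> (\<integral>\<^sup>+ \<omega>. ennreal (spec_norm (aT \<alpha> T) powr m1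
                     * norm (grad (H T \<omega>) \<theta>s) powr m1) \<partial>M) \<le> ennreal M2r"
  proof -
    show "M2r \<ge> 0" by (simp add: M2r_def)
    fix T assume "T \<in> TT"
    then have "(\<integral>\<^sup>+ \<omega>. ennreal (spec_norm (aT \<alpha> T) powr m1
                     * norm (grad (H T \<omega>) \<theta>s) powr m1) \<partial>M) \<le> M2"
      unfolding M2_def by (rule SUP_upper)
    also have "M2 = ennreal M2r" using A12_ii by (simp add: M2r_def M2_def)
    finally show "(\<integral>\<^sup>+ \<omega>. ennreal (spec_norm (aT \<alpha> T) powr m1
                     * norm (grad (H T \<omega>) \<theta>s) powr m1) \<partial>M) \<le> ennreal M2r" .
  qed
  have M3r: "M3r \<ge> 0" "\<And>T. T \<in> TT \<Longrightarrow> (\<integral>\<^sup>+ \<omega>. ennreal (spec_norm (aT \<alpha> T) powr (2 * m1))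
                     * enn_powr (SUP \<theta> \<in> B. ennreal (norm (hess (H T \<omega>) \<theta>))) m1 \<partial>M) \<le> ennreal M3r"
  proof -
    show "M3r \<ge> 0" by (simp add: M3r_def)
    fix T assume "T \<in> TT"
    then have "(\<integral>\<^sup>+ \<omega>. ennreal (spec_norm (aT \<alpha> T) powr (2 * m1))
                     * enn_powr (SUP \<theta> \<in> B. ennreal (norm (hess (H T \<omega>) \<theta>))) m1 \<partial>M) \<le> M3"
      unfolding M3_def by (rule SUP_upper)
    also have "M3 = ennreal M3r" using A12_iii by (simp add: M3r_def M3_def B_def)
    finally show "(\<integral>\<^sup>+ \<omega>. ennreal (spec_norm (aT \<alpha> T) powr (2 * m1))
                     * enn_powr (SUP \<theta> \<in> B. ennreal (norm (hess (H T \<omega>) \<theta>))) m1 \<partial>M) \<le> ennreal M3r" .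
  qed
  define C where "C = real CARD('p) * real CARD('p)"
  have C: "C > 0" by (simp add: C_def)
  define C1 where "C1 = (2 * R0) powr ((1 - q) * m1)"
  define C2 where "C2 = (C * R0) powr m1 * (2 * R0) powr ((1 - q) * m1)"
  have C1: "C1 > 0" using R0 by (simp add: C1_def)
  have C2: "C2 > 0" using R0 C by (simp add: C2_def)
  define K where "K = 2 powr m1 * (C1 * M2r + C2 * M3r) + 1"
  have "0 \<le> 2 powr m1 * (C1 * M2r + C2 * M3r)"
    using C1 C2 M2r(1) M3r(1) by (intro mult_nonneg_nonneg add_nonneg_nonneg) auto
  then have K: "K > 0" by (simp add: K_def)
  have thint: "\<theta>s \<in> interior (closure \<Theta>)"
    using Theta interior_mono[OF closure_subset[of \<Theta>]] interior_open[OF Theta(1)] by auto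
  show ?thesis
  proof (rule exI[of _ R0], intro conjI R0, rule exI[of _ K], intro conjI K ballI impI)
    fix T assume T: "T \<in> TT" and A1: "spec_norm (aT \<alpha> T) \<le> 1"
    define a where "a = aT \<alpha> T"
    define A where "A = spec_norm a"
    have bl: "bounded_linear (\<lambda>x. a *v x)" by simp
    have normle: "norm (a *v u) \<le> A * norm u" for u
      using onorm[OF bl] by (simp add: A_def spec_norm_def)
    have Apos: "0 < A"
    proof -
      obtain i :: 'p where True by simp
      have "(a *v axis i 1) $ i = \<alpha> T i"
        by (simp add: a_def aT_def diag_mat_def matrix_vector_mult_def axis_def if_distrib cong: if_cong)
      then have "a *v axis i 1 \<noteq> 0" using alpha_nz[OF T, of i] by auto
      then show ?thesis unfolding A_def spec_norm_def using onorm_pos_lt[OF bl] by blast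
    qed
    have A1': "A \<le> 1" using A1 by (simp add: A_def a_def)
    define \<sigma> where "\<sigma> = sub_spec_norm (GT q \<theta>s \<alpha> \<xi> T) (J0 \<theta>s)"
    define cs where "cs = \<sigma> powr (q * m1)"
    define E where "E = A powr (-(\<eta> * (2 - q)) * m1)"
    have E: "E > 0" using Apos by (simp add: E_def)
    have rhs: "(K * (spec_norm (aT \<alpha> T) powr (-(\<eta> * (2 - q)))
                            * sub_spec_norm (GT q \<theta>s \<alpha> \<xi> T) (J0 \<theta>s) powr q) powr m1) = K * E * cs"
      by (simp add: A_def a_def \<sigma>_def cs_def E_def powr_mult powr_powr)
    have cs0: "cs \<ge> 0" by (simp add: cs_def)
    show "cT M q \<eta> \<Theta> \<theta>s \<alpha> \<xi> H T m1 R0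
             \<le> ennreal (K * (spec_norm (aT \<alpha> T) powr (-(\<eta> * (2 - q)))
                            * sub_spec_norm (GT q \<theta>s \<alpha> \<xi> T) (J0 \<theta>s) powr q) powr m1)"
    proof (cases "cs = 0")
      case True
      then show ?thesis by (simp add: cT_def flip: \<sigma>_def cs_def)
    next
      case False
      then have csp: "cs > 0" using cs0 by simp
      define r where "r = R0 * A powr (1 - \<eta>)"
      have r0: "0 < r" using R0 Apos by (simp add: r_def)
      have rR0: "r \<le> R0"
      proof -
        have "A powr (1 - \<eta>) \<le> 1" using Apos A1' eta by (intro powr_le1) auto
        then show ?thesis using R0 by (simp add: r_def mult_left_le)
      qed
      define G where "G \<omega> = norm (grad (H T \<omega>) \<theta>s)" for \<omega>
      define S2 where "S2 \<omega> = (SUP \<theta> \<in> B. ennreal (norm (hess (H T \<omega>) \<theta>)))" for \<omega>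
      define P where "P \<omega> = ennreal (A powr m1 * gtil (H T) (closure \<Theta>) \<theta>s \<omega> powr m1)" for \<omega>
      define Q where "Q \<omega> = ennreal (A powr (2 * m1)) * enn_powr (S2 \<omega>) m1" for \<omega>
      define k1 where "k1 = cs * 2 powr m1 * E * C1"
      define k2 where "k2 = cs * 2 powr m1 * E * C2"
      have k1: "k1 > 0" using csp E C1 by (simp add: k1_def)
      have k2: "k2 > 0" using csp E C2 by (simp add: k2_def)
      have gm[measurable]: "gtil (H T) (closure \<Theta>) \<theta>s \<in> borel_measurable M"
        by (rule gtil_meas) (use H_meas[OF T] closure_subset Theta(3) in auto)
      have Pm[measurable]: "P \<in> borel_measurable M" unfolding P_def[abs_def] by measurable
      have good: "enn_powr (cTR q \<eta> \<Theta> \<theta>s \<alpha> H T R0 \<omega>) m1 * ennreal cs \<le> ennreal k1 * P \<omega> + ennreal k2 * Q \<omega>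
              \<and> P \<omega> = ennreal (A powr m1 * G \<omega> powr m1)"
        if \<omega>: "\<omega> \<in> space M" and td: "thrice_differentiable_on (H T \<omega>) B" for \<omega>
      proof -
        have diff: "H T \<omega> differentiable (at z) \<and> grad (H T \<omega>) differentiable (at z)" if "z \<in> ball \<theta>s R0" for z
          using td ballsub that by (auto simp: thrice_differentiable_on_def)
        have "gtil (H T) (closure \<Theta>) \<theta>s \<omega> = gtil (\<lambda>_. H T \<omega>) (closure \<Theta>) \<theta>s \<omega>"
          by (simp add: gtil_def)
        also have "\<dots> = G \<omega>" unfolding G_def
          by (rule gtil_eq) (use diff R0 thint in auto)
        finally have Peq: "P \<omega> = ennreal (A powr m1 * G \<omega> powr m1)" by (simp add: P_def)
        show ?thesis
        proof (cases "S2 \<omega> = \<top>")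
          case True
          have "Q \<omega> = \<top>" using True Apos by (simp add: Q_def enn_powr_def ennreal_mult_top)
          then have "ennreal k2 * Q \<omega> = \<top>" using k2 by (simp add: ennreal_mult_top)
          then show ?thesis using Peq by simp
        next
          case False
          define L where "L = enn2real (S2 \<omega>)"
          have L0: "L \<ge> 0" by (simp add: L_def)
          have S2L: "S2 \<omega> = ennreal L" using False by (simp add: L_def less_top)
          have hb: "norm (hess (H T \<omega>) z) \<le> L" if "z \<in> ball \<theta>s R0" for z
          proof -
            have "ennreal (norm (hess (H T \<omega>) z)) \<le> S2 \<omega>"
              unfolding S2_def using ballsub that by (intro SUP_upper) auto
            then show ?thesis using S2L L0 by simp
          qed
          define Bv where "Bv = (G \<omega> + C * L * r) * A powr q * (2 * r) powr (1 - q)"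
          have cle: "cTR q \<eta> \<Theta> \<theta>s \<alpha> H T R0 \<omega> \<le> ennreal Bv"
            unfolding cTR_def
          proof (rule SUP_least, clarify)
            fix u v
            assume uv: "u \<noteq> v" "norm (aT \<alpha> T *v u) < R0 * spec_norm (aT \<alpha> T) powr (1 - \<eta>)"
               "norm (aT \<alpha> T *v v) < R0 * spec_norm (aT \<alpha> T) powr (1 - \<eta>)"
            define x where "x = \<theta>s + a *v u"
            define y where "y = \<theta>s + a *v v"
            have x: "x \<in> ball \<theta>s r" using uv(2) by (simp add: x_def dist_norm r_def A_def a_def)
            have y: "y \<in> ball \<theta>s r" using uv(3) by (simp add: y_def dist_norm r_def A_def a_def)
            have tb: "\<bar>H T \<omega> x - H T \<omega> y\<bar> \<le> (G \<omega> + C * L * r) * norm (x - y)"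
              unfolding G_def C_def using taylor_bound[OF diff hb rR0 x y] by simp
            define d where "d = norm (x - y)"
            define nuv where "nuv = norm (u - v)"
            have nuv: "nuv > 0" using uv(1) by (simp add: nuv_def)
            have dle1: "d \<le> A * nuv"
              unfolding d_def nuv_def x_def y_def using normle[of "u - v"]
              by (simp add: matrix_vector_mult_diff_distrib)
            have dle2: "d \<le> 2 * r"
            proof -
              have "d \<le> dist \<theta>s x + dist \<theta>s y" unfolding d_def
                by (metis dist_commute dist_norm dist_triangle)
              then show ?thesis using x y by simp
            qed
            have dq: "d \<le> A powr q * nuv powr q * (2 * r) powr (1 - q)"
            proof (cases "d = 0")
              case True then show ?thesis by simp
            next
              case False
              then have dp: "d > 0" by (simp add: d_def)
              have "d = d powr q * d powr (1 - q)" using dp by (simp flip: powr_add)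
              also have "\<dots> \<le> (A * nuv) powr q * (2 * r) powr (1 - q)"
                using dp dle1 dle2 q by (intro mult_mono powr_mono2) auto
              finally show ?thesis by (simp add: powr_mult)
            qed
            have Gn: "0 \<le> G \<omega> + C * L * r" using C L0 r0 by (simp add: G_def)
            have "\<bar>H T \<omega> x - H T \<omega> y\<bar> \<le> (G \<omega> + C * L * r) * (A powr q * nuv powr q * (2 * r) powr (1 - q))"
              using tb mult_left_mono[OF dq Gn] by (simp add: d_def)
            then have "\<bar>H T \<omega> x - H T \<omega> y\<bar> / nuv powr q \<le> Bv"
              using nuv by (simp add: divide_le_eq Bv_def algebra_simps)
            then show "ennreal (\<bar>H T \<omega> (\<theta>s + aT \<alpha> T *v fst (u, v)) - H T \<omega> (\<theta>s + aT \<alpha> T *v snd (u, v))\<bar> /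
                 norm (fst (u, v) - snd (u, v)) powr q) \<le> ennreal Bv"
              by (intro ennreal_leI) (simp add: x_def y_def a_def nuv_def)
          qed
          have Bv0: "Bv \<ge> 0" using C L0 r0 by (simp add: Bv_def G_def)
          have pw: "enn_powr (cTR q \<eta> \<Theta> \<theta>s \<alpha> H T R0 \<omega>) m1 \<le> ennreal (Bv powr m1)"
          proof -
            have nt: "cTR q \<eta> \<Theta> \<theta>s \<alpha> H T R0 \<omega> \<noteq> \<top>" using cle by (metis ennreal_neq_top neq_top_trans)
            have "enn2real (cTR q \<eta> \<Theta> \<theta>s \<alpha> H T R0 \<omega>) \<le> Bv"
              using cle Bv0 nt by (metis enn2real_ennreal enn2real_mono ennreal_neq_top top.not_eq_extremum)
            then show ?thesis using nt m1 by (auto simp: enn_powr_def intro!: ennreal_leI powr_mono2)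
          qed
          have core: "Bv powr m1 \<le> 2 powr m1 * E * C1 * (A powr m1 * G \<omega> powr m1)
                   + 2 powr m1 * E * C2 * (A powr (2 * m1) * L powr m1)"
            unfolding Bv_def E_def C1_def C2_def
            by (rule real_core[OF Apos A1' R0 q eta m1 _ L0 _ r_def]) (use C in \<open>auto simp: G_def\<close>)
          have "enn_powr (cTR q \<eta> \<Theta> \<theta>s \<alpha> H T R0 \<omega>) m1 * ennreal cs \<le> ennreal (Bv powr m1) * ennreal cs"
            using pw by (rule mult_right_mono) simp
          also have "\<dots> = ennreal (Bv powr m1 * cs)" using cs0 by (simp add: ennreal_mult)
          also have "\<dots> \<le> ennreal (k1 * (A powr m1 * G \<omega> powr m1) + k2 * (A powr (2 * m1) * L powr m1))"
            using mult_right_mono[OF core cs0] by (intro ennreal_leI) (simp add: k1_def k2_def algebra_simps)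
          also have "\<dots> = ennreal k1 * P \<omega> + ennreal k2 * Q \<omega>"
            using k1 k2 L0 by (simp add: Peq Q_def S2L enn_powr_def ennreal_mult ennreal_plus)
          finally show ?thesis using Peq by simp
        qed
      qed
      have AEgood: "AE \<omega> in M. enn_powr (cTR q \<eta> \<Theta> \<theta>s \<alpha> H T R0 \<omega>) m1 * ennreal cs \<le> ennreal k1 * P \<omega> + ennreal k2 * Q \<omega>
              \<and> P \<omega> = ennreal (A powr m1 * G \<omega> powr m1)"
        using A12_i[OF T] by (rule AE_mp) (auto simp: B_def intro!: AE_I2 good)
      have "cT M q \<eta> \<Theta> \<theta>s \<alpha> \<xi> H T m1 R0 = (\<integral>\<^sup>+ \<omega>. enn_powr (cTR q \<eta> \<Theta> \<theta>s \<alpha> H T R0 \<omega>) m1 * ennreal cs \<partial>M)"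
        by (simp add: cT_def cs_def \<sigma>_def)
      also have "\<dots> \<le> (\<integral>\<^sup>+ \<omega>. ennreal k1 * P \<omega> + ennreal k2 * Q \<omega> \<partial>M)"
        using AEgood by (intro nn_integral_mono_AE) (auto elim: AE_mp)
      also have "\<dots> \<le> (\<integral>\<^sup>+ \<omega>. ennreal k1 * P \<omega> \<partial>M) + (\<integral>\<^sup>+ \<omega>. ennreal k2 * Q \<omega> \<partial>M)"
        by (rule lower_nn_integral_add) measurable
      also have "(\<integral>\<^sup>+ \<omega>. ennreal k1 * P \<omega> \<partial>M) = ennreal k1 * integral\<^sup>N M P"
        by (rule nn_integral_cmult) measurable
      also have "integral\<^sup>N M P = (\<integral>\<^sup>+ \<omega>. ennreal (spec_norm (aT \<alpha> T) powr m1
                     * norm (grad (H T \<omega>) \<theta>s) powr m1) \<partial>M)"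
        using AEgood by (intro nn_integral_cong_AE) (auto elim: AE_mp simp: A_def a_def G_def)
      also have "\<dots> \<le> ennreal M2r" by (rule M2r(2)[OF T])
      also have "(\<integral>\<^sup>+ \<omega>. ennreal k2 * Q \<omega> \<partial>M) \<le> ennreal k2 * integral\<^sup>N M Q"
        by (rule lower_nn_integral_cmult[OF k2])
      also have "integral\<^sup>N M Q \<le> ennreal M3r"
        using M3r(2)[OF T] by (simp add: Q_def[abs_def] S2_def A_def a_def)
      finally have "cT M q \<eta> \<Theta> \<theta>s \<alpha> \<xi> H T m1 R0 \<le> ennreal k1 * ennreal M2r + ennreal k2 * ennreal M3r"
        by (simp add: add_mono mult_left_mono)
      also have "\<dots> = ennreal (cs * E * (2 powr m1 * (C1 * M2r + C2 * M3r)))"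
      proof -
        have "ennreal k1 * ennreal M2r + ennreal k2 * ennreal M3r = ennreal (k1 * M2r + k2 * M3r)"
          using k1 k2 M2r(1) M3r(1) by (simp add: ennreal_mult ennreal_plus)
        also have "\<dots> = ennreal (cs * E * (2 powr m1 * (C1 * M2r + C2 * M3r)))"
          by (simp add: k1_def k2_def algebra_simps)
        finally show ?thesis .
      qed
      also have "\<dots> \<le> ennreal (K * E * cs)"
        using csp E by (intro ennreal_leI) (simp add: K_def algebra_simps)
      finally show ?thesis by (simp only: rhs)
    qed
  qed
qed

end
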